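(* For the symmetric walk, for the weakly asymmetric walk with any fixed $c>0$, and for the asymmetric walk with any fixed $q<p$, the following holds. If $X_0$ is chosen uniformly at random from $\mathcal T_N$, independently of the steps, then $R_N/N$ converges in distribution to the uniform distribution on $[0,1]$ as $N\to\infty$.
   Context: Fix $N\ge2$ and let $\mathcal T_N=\{0,1,\dots,N\}$. Let $(X_n)_{n\ge0}$ be a nearest-neighbour random walk on $\mathcal T_N$. At each step it moves from $x$ to $x+1$ with probability $p_N$ and to $x-1$ with probability $q_N=1-p_N$, independently of the past, and it is stopped the first time it is at $0$ or $N$. (If it starts at $0$ or $N$ it is stopped immediately; this has vanishing probability and does not affect the limit.) The walk is called: - symmetric if $p_N=q_N=1/2$; - weakly asymmetric (with parameter $c>0$ fixed) if $q_N=1/2-c/N$ and $p_N=1/2+c/N$, for $N$ large; - asymmetric if $p_N=p$ and $q_N=q$ are fixed with $p+q=1$ and $q<p$. For $a\in\mathcal T_N$ let $T_a=\inf\{n\ge1:X_n=a\}$ and $\tau_N=T_0\wedge T_N$. Let $G(y)=\sum_{k=0}^{\tau_N}\mathbf 1\{X_k=y\}$, and let the range be $R_N=\#\{y\in\mathcal T_N:G(y)\ge1\}$. *)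

theory Defs
  imports "HOL-Probability.Probability"
begin

text \<open>Nearest-neighbour walk on {0..N}, stopped at the first visit to 0 or N.
  The start is x; the i.i.d. steps are encoded by a boolean stream (True = step +1).\<close>
fun walk :: "nat \<Rightarrow> int \<Rightarrow> bool stream \<Rightarrow> nat \<Rightarrow> int" where
  "walk N x \<omega> 0 = x"
| "walk N x \<omega> (Suc n) =
     (let y = walk N x \<omega> n in
      if y = 0 \<or> y = int N then y else if \<omega> !! n then y + 1 else y - 1)"

text \<open>Hitting time tau_N = T_0 min T_N (first n \<ge> 1 with X_n in {0,N});
  by convention the walk is stopped immediately (tau = 0) if it starts at 0 or N.\<close>
definition tau :: "nat \<Rightarrow> int \<Rightarrow> bool stream \<Rightarrow> enat" where
  "tau N x \<omega> =
     (if x = 0 \<or> x = int N then 0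
      else if \<exists>n\<ge>1. walk N x \<omega> n \<in> {0, int N}
           then enat (LEAST n. n \<ge> 1 \<and> walk N x \<omega> n \<in> {0, int N}) else \<infinity>)"

definition local_time :: "nat \<Rightarrow> int \<Rightarrow> bool stream \<Rightarrow> int \<Rightarrow> enat" where
  "local_time N x \<omega> y =
     (let S = {k. enat k \<le> tau N x \<omega> \<and> walk N x \<omega> k = y}
      in if finite S then enat (card S) else \<infinity>)"

definition range_walk :: "nat \<Rightarrow> int \<Rightarrow> bool stream \<Rightarrow> nat" where
  "range_walk N x \<omega> = card {y \<in> {0..int N}. local_time N x \<omega> y \<ge> 1}"

definition walk_space :: "nat \<Rightarrow> real \<Rightarrow> (int \<times> bool stream) measure" where
  "walk_space N pN =
     measure_pmf (pmf_of_set {0..int N}) \<Otimes>\<^sub>M stream_space (measure_pmf (bernoulli_pmf pN))"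

definition range_law :: "(nat \<Rightarrow> real) \<Rightarrow> nat \<Rightarrow> real measure" where
  "range_law p N = distr (walk_space N (p N)) borel
      (\<lambda>(x, \<omega>). real (range_walk N x \<omega>) / real N)"

end

theory Submission
  imports Defs
begin


definition st :: "bool \<Rightarrow> int" where "st b = (if b then 1 else -1)"

primrec F :: "int \<Rightarrow> bool stream \<Rightarrow> nat \<Rightarrow> int" where
  "F x \<omega> 0 = x"
| "F x \<omega> (Suc k) = F x \<omega> k + st (\<omega> !! k)"

lemma F_shift: "F (x + d) \<omega> k = F x \<omega> k + d"
  by (induction k) auto

lemma F_Suc': "F x \<omega> (Suc k) = F (x + st (shd \<omega>)) (stl \<omega>) k"
  by (induction k) (auto simp: snth.simps(2)[symmetric] simp del: snth.simps(2))

lemma F_step: "\<bar>F x \<omega> (Suc k) - F x \<omega> k\<bar> = 1"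
  by (auto simp: st_def)

lemma ivt_up:
  fixes f :: "nat \<Rightarrow> int"
  assumes step: "\<And>k. \<bar>f (Suc k) - f k\<bar> \<le> 1" and "i \<le> j" "f i \<le> c" "c \<le> f j"
  shows "\<exists>k. i \<le> k \<and> k \<le> j \<and> f k = c"
  using assms(2-)
proof (induction j)
  case 0 then show ?case by auto
next
  case (Suc j)
  show ?case
  proof (cases "i \<le> j \<and> c \<le> f j")
    case True then show ?thesis using Suc by fastforce
  next
    case False
    then have "i = Suc j \<or> f j < c" using Suc.prems by auto
    then show ?thesis
    proof
      assume "i = Suc j" then show ?thesis using Suc by auto
    next
      assume "f j < c"
      then have "f (Suc j) = c" using Suc.prems step[of j] by auto
      then show ?thesis using Suc.prems by auto
    qed
  qed
qed

lemma ivt_down: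
  fixes f :: "nat \<Rightarrow> int"
  assumes step: "\<And>k. \<bar>f (Suc k) - f k\<bar> \<le> 1" and "i \<le> j" "c \<le> f i" "f j \<le> c"
  shows "\<exists>k. i \<le> k \<and> k \<le> j \<and> f k = c"
proof -
  have "\<exists>k. i \<le> k \<and> k \<le> j \<and> (\<lambda>k. - f k) k = - c"
    by (rule ivt_up) (use assms in \<open>auto simp: abs_minus_commute\<close>)
  then show ?thesis by auto
qed

lemma walk_step: "\<bar>walk N x \<omega> (Suc k) - walk N x \<omega> k\<bar> \<le> 1"
  by (auto simp: Let_def)

lemma walk_stop: "walk N x \<omega> k \<in> {0, int N} \<Longrightarrow> walk N x \<omega> (k + j) = walk N x \<omega> k"
  by (induction j) (auto simp: Let_def)

lemma walk_bounds: "0 \<le> x \<Longrightarrow> x \<le> int N \<Longrightarrow> 0 \<le> walk N x \<omega> k \<and> walk N x \<omega> k \<le> int N"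
  by (induction k) (auto simp: Let_def)

lemma walk_F: "(\<And>j. j < k \<Longrightarrow> 0 < F x \<omega> j \<and> F x \<omega> j < int N) \<Longrightarrow> walk N x \<omega> k = F x \<omega> k"
proof (induction k)
  case (Suc k)
  then have e: "walk N x \<omega> k = F x \<omega> k" by auto
  have "0 < F x \<omega> k \<and> F x \<omega> k < int N" using Suc.prems by auto
  then show ?case using e by (auto simp: Let_def st_def)
qed auto

lemma tau_stop:
  assumes "tau N x \<omega> = enat t" shows "walk N x \<omega> t \<in> {0, int N}"
proof (cases "x = 0 \<or> x = int N")
  case True then show ?thesis using assms by (auto simp: tau_def zero_enat_def)
next
  case False
  then have ex: "\<exists>n\<ge>1. walk N x \<omega> n \<in> {0, int N}" using assms by (auto simp: tau_def split: if_splits)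
  then have "t = (LEAST n. n \<ge> 1 \<and> walk N x \<omega> n \<in> {0, int N})"
    using assms False by (auto simp: tau_def)
  then show ?thesis using LeastI_ex[OF ex] by simp
qed

lemma local_time_ge1: "local_time N x \<omega> y \<ge> 1 \<longleftrightarrow> (\<exists>k. walk N x \<omega> k = y)"
proof
  assume a: "local_time N x \<omega> y \<ge> 1"
  have "{k. enat k \<le> tau N x \<omega> \<and> walk N x \<omega> k = y} \<noteq> {}"
  proof
    assume e: "{k. enat k \<le> tau N x \<omega> \<and> walk N x \<omega> k = y} = {}"
    show False using a unfolding local_time_def Let_def e by (simp add: zero_enat_def one_enat_def)
  qed
  then show "\<exists>k. walk N x \<omega> k = y" by auto
next
  assume "\<exists>k. walk N x \<omega> k = y"
  then obtain k where k: "walk N x \<omega> k = y" by auto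
  have "\<exists>k. enat k \<le> tau N x \<omega> \<and> walk N x \<omega> k = y"
  proof (cases "tau N x \<omega>")
    case (enat t)
    show ?thesis
    proof (cases "k \<le> t")
      case True then show ?thesis using k enat by auto
    next
      case False
      have "walk N x \<omega> (t + (k - t)) = walk N x \<omega> t"
        by (rule walk_stop[OF tau_stop[OF enat]])
      then show ?thesis using False k enat by (intro exI[of _ t]) auto
    qed
  qed (use k in auto)
  then have "{k. enat k \<le> tau N x \<omega> \<and> walk N x \<omega> k = y} \<noteq> {}" by auto
  then show "local_time N x \<omega> y \<ge> 1"
    by (auto simp: local_time_def Let_def one_enat_def Suc_le_eq card_gt_0_iff)
qed

lemma range_walk_eq: "range_walk N x \<omega> = card {y \<in> {0..int N}. \<exists>k. walk N x \<omega> k = y}"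
  by (simp add: range_walk_def local_time_ge1)

lemma range_walk_eq2: "0 \<le> x \<Longrightarrow> x \<le> int N \<Longrightarrow> range_walk N x \<omega> = card (range (walk N x \<omega>))"
proof -
  assume x: "0 \<le> x" "x \<le> int N"
  have "{y \<in> {0..int N}. \<exists>k. walk N x \<omega> k = y} = range (walk N x \<omega>)"
  proof (intro equalityI subsetI)
    fix y assume "y \<in> range (walk N x \<omega>)"
    then obtain k where "y = walk N x \<omega> k" by auto
    then show "y \<in> {y \<in> {0..int N}. \<exists>k. walk N x \<omega> k = y}" using walk_bounds[OF x, of \<omega> k] by auto
  qed auto
  then show ?thesis by (simp add: range_walk_eq)
qed

definition HL :: "int \<Rightarrow> int \<Rightarrow> int \<Rightarrow> bool stream set" where
  "HL a b x = {\<omega>. \<exists>k. F x \<omega> k = a \<and> (\<forall>j<k. a < F x \<omega> j \<and> F x \<omega> j < b)}"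
definition HR :: "int \<Rightarrow> int \<Rightarrow> int \<Rightarrow> bool stream set" where
  "HR a b x = {\<omega>. \<exists>k. F x \<omega> k = b \<and> (\<forall>j<k. a < F x \<omega> j \<and> F x \<omega> j < b)}"
definition NE :: "int \<Rightarrow> int \<Rightarrow> int \<Rightarrow> bool stream set" where
  "NE a b x = {\<omega>. \<forall>k. a < F x \<omega> k \<and> F x \<omega> k < b}"

lemma HR_shift: "HR (a + d) (b + d) (x + d) = HR a b x"
  by (auto simp: HR_def F_shift)

lemma HL_HR_disj: assumes "a < b" shows "HL a b x \<inter> HR a b x = {}"
proof (safe)
  fix \<omega> assume l: "\<omega> \<in> HL a b x" and r: "\<omega> \<in> HR a b x"
  from l obtain k1 where k1: "F x \<omega> k1 = a" "\<forall>j<k1. a < F x \<omega> j \<and> F x \<omega> j < b" by (auto simp: HL_def)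
  from r obtain k2 where k2: "F x \<omega> k2 = b" "\<forall>j<k2. a < F x \<omega> j \<and> F x \<omega> j < b" by (auto simp: HR_def)
  show "\<omega> \<in> {}"
  proof (cases k1 k2 rule: linorder_cases)
    case less then show ?thesis using k1 k2 by force
  next
    case equal then show ?thesis using k1 k2 assms by simp
  next
    case greater then show ?thesis using k1 k2 by force
  qed
qed

lemma NE_disj: "NE a b x \<inter> (HL a b x \<union> HR a b x) = {}"
  by (auto simp: NE_def HL_def HR_def)

lemma exhaust:
  assumes "a < x" "x < b" "\<omega> \<notin> NE a b x"
  shows "\<omega> \<in> HL a b x \<union> HR a b x"
proof -
  let ?P = "\<lambda>k. \<not> (a < F x \<omega> k \<and> F x \<omega> k < b)"
  have ex: "\<exists>k. ?P k" using assms(3) by (auto simp: NE_def)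
  define k where "k = (LEAST k. ?P k)"
  have Pk: "?P k" unfolding k_def by (rule LeastI_ex[OF ex])
  have below: "\<forall>j<k. a < F x \<omega> j \<and> F x \<omega> j < b"
    unfolding k_def using not_less_Least by blast
  have "k \<noteq> 0"
  proof
    assume "k = 0" then show False using Pk assms by simp
  qed
  then obtain m where m: "k = Suc m" by (cases k) auto
  have "a < F x \<omega> m \<and> F x \<omega> m < b" using below m by auto
  moreover have "\<bar>F x \<omega> (Suc m) - F x \<omega> m\<bar> = 1" by (rule F_step)
  ultimately have "F x \<omega> k = a \<or> F x \<omega> k = b" using Pk m by auto
  then show ?thesis using below by (auto simp: HL_def HR_def)
qed

lemma HL_mono: "b \<le> b' \<Longrightarrow> HL a b x \<subseteq> HL a b' x"
  unfolding HL_def using order_less_le_trans by blast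
lemma HR_mono: "a' \<le> a \<Longrightarrow> HR a b x \<subseteq> HR a' b x"
  unfolding HR_def using order_le_less_trans by blast

lemma HL_range:
  assumes "\<omega> \<in> HL 0 b x" "0 < x"
  obtains k where "F x \<omega> k = 0" "\<forall>j<k. 0 < F x \<omega> j \<and> F x \<omega> j < b"
  using assms by (auto simp: HL_def)

lemma walk_range_HL:
  assumes "F x \<omega> k = 0" "\<forall>j<k. 0 < F x \<omega> j \<and> F x \<omega> j < int N"
  shows "range (walk N x \<omega>) = F x \<omega> ` {..k}"
proof -
  have a: "walk N x \<omega> j = F x \<omega> j" if "j \<le> k" for j
    by (rule walk_F) (use that assms in auto)
  have b: "walk N x \<omega> j = 0" if "j \<ge> k" for j
  proof -
    have "walk N x \<omega> (k + (j - k)) = walk N x \<omega> k"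
      by (rule walk_stop) (use a[of k] assms in auto)
    then show ?thesis using a[of k] assms that by auto
  qed
  show ?thesis
  proof (intro equalityI subsetI)
    fix v assume "v \<in> range (walk N x \<omega>)"
    then obtain j where v: "v = walk N x \<omega> j" by auto
    show "v \<in> F x \<omega> ` {..k}"
    proof (cases "j \<le> k")
      case True then show ?thesis using a v by auto
    next
      case False then show ?thesis using b[of j] a[of k] assms v by (auto intro!: image_eqI[of _ _ k])
    qed
  next
    fix v assume "v \<in> F x \<omega> ` {..k}"
    then obtain j where "j \<le> k" "v = F x \<omega> j" by auto
    then show "v \<in> range (walk N x \<omega>)" using a by (metis rangeI)
  qed
qed

lemma walk_range_HR:
  assumes "F x \<omega> k = int N" "\<forall>j<k. 0 < F x \<omega> j \<and> F x \<omega> j < int N"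
  shows "range (walk N x \<omega>) = F x \<omega> ` {..k}"
proof -
  have a: "walk N x \<omega> j = F x \<omega> j" if "j \<le> k" for j
    by (rule walk_F) (use that assms in auto)
  have b: "walk N x \<omega> j = int N" if "j \<ge> k" for j
  proof -
    have "walk N x \<omega> (k + (j - k)) = walk N x \<omega> k"
      by (rule walk_stop) (use a[of k] assms in auto)
    then show ?thesis using a[of k] assms that by auto
  qed
  show ?thesis
  proof (intro equalityI subsetI)
    fix v assume "v \<in> range (walk N x \<omega>)"
    then obtain j where v: "v = walk N x \<omega> j" by auto
    show "v \<in> F x \<omega> ` {..k}"
    proof (cases "j \<le> k")
      case True then show ?thesis using a v by auto
    next
      case False then show ?thesis using b[of j] a[of k] assms v by (auto intro!: image_eqI[of _ _ k])
    qed
  next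
    fix v assume "v \<in> F x \<omega> ` {..k}"
    then obtain j where "j \<le> k" "v = F x \<omega> j" by auto
    then show "v \<in> range (walk N x \<omega>)" using a by (metis rangeI)
  qed
qed

lemma step_F: "\<bar>F x \<omega> (Suc k) - F x \<omega> k\<bar> \<le> 1"
  using F_step by simp

lemma L1:
  assumes x: "0 < x" "x < int N" and r: "1 \<le> r" "r \<le> N" and h: "\<omega> \<in> HL 0 (int N) x"
  shows "card (range (walk N x \<omega>)) \<le> r \<longleftrightarrow> \<omega> \<in> HL 0 (int r) x"
proof -
  obtain k where k: "F x \<omega> k = 0" "\<forall>j<k. 0 < F x \<omega> j \<and> F x \<omega> j < int N"
    using h by (auto simp: HL_def)
  have V: "range (walk N x \<omega>) = F x \<omega> ` {..k}" by (rule walk_range_HL[OF k])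
  show ?thesis
  proof
    assume c: "card (range (walk N x \<omega>)) \<le> r"
    have "\<forall>j<k. F x \<omega> j < int r"
    proof (rule ccontr)
      assume "\<not> (\<forall>j<k. F x \<omega> j < int r)"
      then obtain j where j: "j < k" "F x \<omega> j \<ge> int r" by auto
      have "{0..int r} \<subseteq> F x \<omega> ` {..k}"
      proof
        fix c assume "c \<in> {0..int r}"
        then obtain i where "j \<le> i" "i \<le> k" "F x \<omega> i = c"
          using ivt_down[of "F x \<omega>" j k c, OF step_F] j k by auto
        then show "c \<in> F x \<omega> ` {..k}" by auto
      qed
      then have "card {0..int r} \<le> card (F x \<omega> ` {..k})" by (intro card_mono) auto
      then show False using c V by simp
    qed
    then show "\<omega> \<in> HL 0 (int r) x" using k by (auto simp: HL_def)
  next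
    assume "\<omega> \<in> HL 0 (int r) x"
    then obtain k' where k': "F x \<omega> k' = 0" "\<forall>j<k'. 0 < F x \<omega> j \<and> F x \<omega> j < int r"
      by (auto simp: HL_def)
    have "k' = k"
    proof (cases k' k rule: linorder_cases)
      case less then show ?thesis using k k' by force
    next
      case greater then show ?thesis using k k' by force
    qed
    have "F x \<omega> ` {..k} \<subseteq> {0..int r - 1}"
    proof (rule image_subsetI)
      fix j assume "j \<in> {..k}" then have "j < k \<or> j = k" by auto
      then show "F x \<omega> j \<in> {0..int r - 1}" using k' \<open>k' = k\<close> r by auto
    qed
    then have "card (F x \<omega> ` {..k}) \<le> card {0..int r - 1}" by (intro card_mono) auto
    then show "card (range (walk N x \<omega>)) \<le> r" using V by simp
  qed
qed

lemma L2:
  assumes x: "0 < x" "x < int N" and r: "1 \<le> r" "r \<le> N" and h: "\<omega> \<in> HR 0 (int N) x"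
  shows "card (range (walk N x \<omega>)) \<le> r \<longleftrightarrow> \<omega> \<in> HR (int N - int r) (int N) x"
proof -
  obtain k where k: "F x \<omega> k = int N" "\<forall>j<k. 0 < F x \<omega> j \<and> F x \<omega> j < int N"
    using h by (auto simp: HR_def)
  have V: "range (walk N x \<omega>) = F x \<omega> ` {..k}" by (rule walk_range_HR[OF k])
  show ?thesis
  proof
    assume c: "card (range (walk N x \<omega>)) \<le> r"
    have "\<forall>j<k. int N - int r < F x \<omega> j"
    proof (rule ccontr)
      assume "\<not> (\<forall>j<k. int N - int r < F x \<omega> j)"
      then obtain j where j: "j < k" "F x \<omega> j \<le> int N - int r" by auto
      have "{int N - int r..int N} \<subseteq> F x \<omega> ` {..k}"
      proof
        fix c assume "c \<in> {int N - int r..int N}"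
        then obtain i where "j \<le> i" "i \<le> k" "F x \<omega> i = c"
          using ivt_up[of "F x \<omega>" j k c, OF step_F] j k by auto
        then show "c \<in> F x \<omega> ` {..k}" by auto
      qed
      then have "card {int N - int r..int N} \<le> card (F x \<omega> ` {..k})" by (intro card_mono) auto
      then show False using c V by simp
    qed
    then show "\<omega> \<in> HR (int N - int r) (int N) x" using k by (auto simp: HR_def)
  next
    assume "\<omega> \<in> HR (int N - int r) (int N) x"
    then obtain k' where k': "F x \<omega> k' = int N" "\<forall>j<k'. int N - int r < F x \<omega> j \<and> F x \<omega> j < int N"
      by (auto simp: HR_def)
    have "k' = k"
    proof (cases k' k rule: linorder_cases)
      case less then show ?thesis using k k' by force
    next
      case greater then show ?thesis using k k' by force
    qed
    have "F x \<omega> ` {..k} \<subseteq> {int N - int r + 1..int N}"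
    proof (rule image_subsetI)
      fix j assume "j \<in> {..k}" then have "j < k \<or> j = k" by auto
      then show "F x \<omega> j \<in> {int N - int r + 1..int N}" using k' \<open>k' = k\<close> r by auto
    qed
    then have "card (F x \<omega> ` {..k}) \<le> card {int N - int r + 1..int N}" by (intro card_mono) auto
    then show "card (range (walk N x \<omega>)) \<le> r" using V by simp
  qed
qed

lemma event_eq:
  assumes x: "0 < x" "x < int N" and r: "1 \<le> r" "r \<le> N"
  shows "{\<omega>. card (range (walk N x \<omega>)) \<le> r} - NE 0 (int N) x
       = HL 0 (int r) x \<union> HR (int N - int r) (int N) x"
proof -
  have s1: "HL 0 (int r) x \<subseteq> HL 0 (int N) x" by (rule HL_mono) (use r in auto)
  have s2: "HR (int N - int r) (int N) x \<subseteq> HR 0 (int N) x" by (rule HR_mono) (use r in auto)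
  have d: "HL 0 (int N) x \<inter> HR 0 (int N) x = {}" by (rule HL_HR_disj) (use x in auto)
  have nd: "NE 0 (int N) x \<inter> (HL 0 (int N) x \<union> HR 0 (int N) x) = {}" by (rule NE_disj)
  show ?thesis
  proof safe
    fix \<omega> assume "card (range (walk N x \<omega>)) \<le> r" "\<omega> \<notin> NE 0 (int N) x"
      "\<omega> \<notin> HR (int N - int r) (int N) x"
    then show "\<omega> \<in> HL 0 (int r) x"
      using exhaust[of 0 x "int N" \<omega>] x L1[OF x r] L2[OF x r] by auto
  next
    fix \<omega> assume "\<omega> \<in> HL 0 (int r) x"
    then show "card (range (walk N x \<omega>)) \<le> r" using L1[OF x r] s1 by auto
  next
    fix \<omega> assume "\<omega> \<in> HL 0 (int r) x" "\<omega> \<in> NE 0 (int N) x"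
    then show False using s1 nd by auto
  next
    fix \<omega> assume "\<omega> \<in> HR (int N - int r) (int N) x"
    then show "card (range (walk N x \<omega>)) \<le> r" using L2[OF x r] s2 by auto
  next
    fix \<omega> assume "\<omega> \<in> HR (int N - int r) (int N) x" "\<omega> \<in> NE 0 (int N) x"
    then show False using s2 nd by auto
  qed
qed

lemma HL_empty: "0 < x \<Longrightarrow> r \<le> x \<Longrightarrow> HL 0 r x = {}"
  by (auto simp: HL_def) (metis F.simps(1) bot_nat_0.not_eq_extremum less_irrefl order_less_le_trans)
lemma HR_empty: "x < N \<Longrightarrow> x \<le> a \<Longrightarrow> HR a N x = {}"
  by (auto simp: HR_def) (metis F.simps(1) bot_nat_0.not_eq_extremum less_irrefl order_le_less_trans)

lemma walk_boundary: "x \<in> {0, int N} \<Longrightarrow> range (walk N x \<omega>) = {x}"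
proof -
  assume "x \<in> {0, int N}"
  then have "walk N x \<omega> (0 + j) = walk N x \<omega> 0" for j by (intro walk_stop) auto
  then show ?thesis by auto
qed

definition Sp :: "real \<Rightarrow> bool stream measure" where
  "Sp q = stream_space (measure_pmf (bernoulli_pmf q))"

lemma space_Sp[simp]: "space (Sp q) = UNIV"
  by (simp add: Sp_def space_stream_space)

lemma snth_sets: "{\<omega>. \<omega> !! k} \<in> sets (Sp q)"
proof -
  have "(\<lambda>\<omega>. \<omega> !! k) \<in> measurable (Sp q) (measure_pmf (bernoulli_pmf q))"
    unfolding Sp_def by (rule measurable_snth)
  from measurable_sets[OF this, of "{True}"] show ?thesis by (simp add: vimage_def)
qed

lemma snth_sets': "{\<omega>. \<not> \<omega> !! k} \<in> sets (Sp q)"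
proof -
  have "UNIV - {\<omega>. \<omega> !! k} \<in> sets (Sp q)"
    using sets.compl_sets[OF snth_sets[of k q]] by simp
  then show ?thesis by (simp add: Collect_neg_eq Compl_eq_Diff_UNIV)
qed

lemma UNIV_Sp: "UNIV \<in> sets (Sp q)"
  using sets.top[of "Sp q"] by simp

lemma F_sets: "{\<omega>. F x \<omega> k = c} \<in> sets (Sp q)"
proof (induction k arbitrary: c)
  case 0 then show ?case by (cases "x = c") (auto simp: UNIV_Sp)
next
  case (Suc k)
  have eq: "{\<omega>. F x \<omega> (Suc k) = c} = ({\<omega>. F x \<omega> k = c - 1} \<inter> {\<omega>. \<omega> !! k}) \<union>
      ({\<omega>. F x \<omega> k = c + 1} \<inter> {\<omega>. \<not> \<omega> !! k})"
    by (auto simp: st_def)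
  show ?case unfolding eq using Suc snth_sets snth_sets' by auto
qed

lemma F_meas[measurable]: "(\<lambda>\<omega>. F x \<omega> k) \<in> measurable (Sp q) (count_space UNIV)"
  by (subst measurable_count_space_eq2_countable) (auto simp: vimage_def F_sets)

lemma walk_sets: "{\<omega>. walk N x \<omega> k = c} \<in> sets (Sp q)"
proof (induction k arbitrary: c)
  case 0 then show ?case by (cases "x = c") (auto simp: UNIV_Sp)
next
  case (Suc k)
  have eq: "{\<omega>. walk N x \<omega> (Suc k) = c} =
      (if c \<in> {0, int N} then {\<omega>. walk N x \<omega> k = c} else {}) \<union>
      (if c - 1 \<notin> {0, int N} then {\<omega>. walk N x \<omega> k = c - 1} \<inter> {\<omega>. \<omega> !! k} else {}) \<union>
      (if c + 1 \<notin> {0, int N} then {\<omega>. walk N x \<omega> k = c + 1} \<inter> {\<omega>. \<not> \<omega> !! k} else {})"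
  proof (intro equalityI subsetI)
    fix \<omega> assume "\<omega> \<in> {\<omega>. walk N x \<omega> (Suc k) = c}"
    then have h: "walk N x \<omega> (Suc k) = c" by simp
    show "\<omega> \<in> (if c \<in> {0, int N} then {\<omega>. walk N x \<omega> k = c} else {}) \<union>
      (if c - 1 \<notin> {0, int N} then {\<omega>. walk N x \<omega> k = c - 1} \<inter> {\<omega>. \<omega> !! k} else {}) \<union>
      (if c + 1 \<notin> {0, int N} then {\<omega>. walk N x \<omega> k = c + 1} \<inter> {\<omega>. \<not> \<omega> !! k} else {})"
    proof (cases "walk N x \<omega> k \<in> {0, int N}")
      case True then show ?thesis using h by (simp add: Let_def)
    next
      case False then show ?thesis using h by (cases "\<omega> !! k") (auto simp: Let_def)
    qed
  next
    fix \<omega> assume "\<omega> \<in> (if c \<in> {0, int N} then {\<omega>. walk N x \<omega> k = c} else {}) \<union>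
      (if c - 1 \<notin> {0, int N} then {\<omega>. walk N x \<omega> k = c - 1} \<inter> {\<omega>. \<omega> !! k} else {}) \<union>
      (if c + 1 \<notin> {0, int N} then {\<omega>. walk N x \<omega> k = c + 1} \<inter> {\<omega>. \<not> \<omega> !! k} else {})"
    then show "\<omega> \<in> {\<omega>. walk N x \<omega> (Suc k) = c}"
      by (auto simp: Let_def split: if_splits)
  qed
  show ?case unfolding eq using Suc snth_sets snth_sets' by auto
qed

lemma walk_meas[measurable]: "(\<lambda>\<omega>. walk N x \<omega> k) \<in> measurable (Sp q) (count_space UNIV)"
  by (subst measurable_count_space_eq2_countable) (auto simp: vimage_def walk_sets)

lemma real_card_filter: "finite A \<Longrightarrow> real (card {y\<in>A. P y}) = (\<Sum>y\<in>A. if P y then 1 else 0)"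
  by (simp add: sum.inter_filter[symmetric])

lemma rw_meas[measurable]: "(\<lambda>\<omega>. real (range_walk N x \<omega>)) \<in> borel_measurable (Sp q)"
  unfolding range_walk_eq by (subst real_card_filter) auto

lemma HL_sets[measurable]: "HL a b x \<in> sets (Sp q)"
proof -
  have "{\<omega> \<in> space (Sp q). \<exists>k. F x \<omega> k = a \<and> (\<forall>j<k. a < F x \<omega> j \<and> F x \<omega> j < b)} \<in> sets (Sp q)"
    by measurable
  then show ?thesis by (simp add: HL_def)
qed

lemma HR_sets[measurable]: "HR a b x \<in> sets (Sp q)"
proof -
  have "{\<omega> \<in> space (Sp q). \<exists>k. F x \<omega> k = b \<and> (\<forall>j<k. a < F x \<omega> j \<and> F x \<omega> j < b)} \<in> sets (Sp q)"
    by measurable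
  then show ?thesis by (simp add: HR_def)
qed

lemma NE_sets[measurable]: "NE a b x \<in> sets (Sp q)"
proof -
  have "{\<omega> \<in> space (Sp q). \<forall>k. a < F x \<omega> k \<and> F x \<omega> k < b} \<in> sets (Sp q)"
    by measurable
  then show ?thesis by (simp add: NE_def)
qed

lemma prob_Sp: "prob_space (Sp q)"
  unfolding Sp_def by (rule prob_space.prob_space_stream_space[OF measure_pmf.prob_space_axioms])

lemma NE_Stream: "t ## \<omega> \<in> NE a b x \<longleftrightarrow> a < x \<and> x < b \<and> \<omega> \<in> NE a b (x + st t)"
proof -
  have s: "F x (t ## \<omega>) (Suc k) = F (x + st t) \<omega> k" for k
    using F_Suc'[of x "t ## \<omega>" k] by simp
  show ?thesis
  proof
    assume h: "t ## \<omega> \<in> NE a b x"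
    have allk: "\<forall>k. a < F x (t ## \<omega>) k \<and> F x (t ## \<omega>) k < b" using h by (simp add: NE_def)
    from spec[OF this, of 0] have "a < x \<and> x < b" by simp
    moreover have "a < F (x + st t) \<omega> k \<and> F (x + st t) \<omega> k < b" for k
    proof -
      have "a < F x (t ## \<omega>) (Suc k) \<and> F x (t ## \<omega>) (Suc k) < b" using allk by blast
      then show ?thesis unfolding s .
    qed
    ultimately show "a < x \<and> x < b \<and> \<omega> \<in> NE a b (x + st t)" by (auto simp: NE_def)
  next
    assume h: "a < x \<and> x < b \<and> \<omega> \<in> NE a b (x + st t)"
    have "a < F x (t ## \<omega>) k \<and> F x (t ## \<omega>) k < b" for k
    proof (cases k)
      case 0 then show ?thesis using h by simp
    next
      case (Suc m)
      have "\<forall>k. a < F (x + st t) \<omega> k \<and> F (x + st t) \<omega> k < b" using h by (simp add: NE_def)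
      then have "a < F (x + st t) \<omega> m \<and> F (x + st t) \<omega> m < b" by blast
      then show ?thesis unfolding Suc s .
    qed
    then show "t ## \<omega> \<in> NE a b x" by (simp add: NE_def)
  qed
qed



lemma NE_rec:
  assumes q: "0 \<le> q" "q \<le> 1" and x: "a < x" "x < b"
  shows "measure (Sp q) (NE a b x) = q * measure (Sp q) (NE a b (x + 1)) + (1 - q) * measure (Sp q) (NE a b (x - 1))"
proof -
  have "ennreal (measure (Sp q) (NE a b x)) =
      (\<integral>\<^sup>+t. ennreal (measure (Sp q) {\<omega> \<in> space (Sp q). t ## \<omega> \<in> NE a b x}) \<partial>measure_pmf (bernoulli_pmf q))"
    using prob_space.prob_stream_space[OF measure_pmf.prob_space_axioms, of "bernoulli_pmf q" "\<lambda>\<omega>. \<omega> \<in> NE a b x"] NE_sets[of a b x q]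
    by (simp add: Sp_def space_stream_space)
  also have "\<dots> = (\<integral>\<^sup>+t. ennreal (measure (Sp q) (NE a b (x + st t))) \<partial>measure_pmf (bernoulli_pmf q))"
    using x by (simp add: NE_Stream)
  also have "\<dots> = ennreal (measure (Sp q) (NE a b (x + 1))) * ennreal q + ennreal (measure (Sp q) (NE a b (x - 1))) * ennreal (1 - q)"
    by (subst nn_integral_bernoulli_pmf) (use q in \<open>auto simp: st_def\<close>)
  also have "\<dots> = ennreal (measure (Sp q) (NE a b (x + 1)) * q) + ennreal (measure (Sp q) (NE a b (x - 1)) * (1 - q))"
    using q by (simp add: ennreal_mult)
  also have "\<dots> = ennreal (measure (Sp q) (NE a b (x + 1)) * q + measure (Sp q) (NE a b (x - 1)) * (1 - q))"
    by (rule ennreal_plus[symmetric]) (use q in auto)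
  finally have "measure (Sp q) (NE a b x) = measure (Sp q) (NE a b (x + 1)) * q + measure (Sp q) (NE a b (x - 1)) * (1 - q)"
    using q by (subst (asm) ennreal_inj) auto
  then show ?thesis by (simp add: mult.commute)
qed

lemma maxp:
  fixes u :: "int \<Rightarrow> real"
  assumes nn: "\<And>x. 0 \<le> u x" and bd: "\<And>x. x \<le> a \<or> b \<le> x \<Longrightarrow> u x = 0"
    and rec: "\<And>x. a < x \<Longrightarrow> x < b \<Longrightarrow> u x = q * u (x + 1) + (1 - q) * u (x - 1)"
    and q: "0 < q" "q \<le> 1"
  shows "u x = 0"
proof (cases "a < x \<and> x < b")
  case False then show ?thesis using bd by auto
next
  case True
  define M where "M = Max (u ` {a..b})"
  have fin: "finite (u ` {a..b})" by auto
  have ne: "u ` {a..b} \<noteq> {}" using True by auto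
  have le: "u y \<le> M" if "y \<in> {a..b}" for y unfolding M_def using fin that by auto
  obtain x0 where x0: "x0 \<in> {a..b}" "u x0 = M" using Max_in[OF fin ne] unfolding M_def by auto
  have claim: "x0 + int j \<le> b \<longrightarrow> u (x0 + int j) = M" for j
  proof (induction j)
    case 0 then show ?case using x0 by simp
  next
    case (Suc j)
    show ?case
    proof
      assume h: "x0 + int (Suc j) \<le> b"
      define y where "y = x0 + int j"
      have uy: "u y = M" using Suc h unfolding y_def by auto
      have y1: "y + 1 \<in> {a..b}" using h x0 unfolding y_def by auto
      have "u (y + 1) = M"
      proof (cases "y \<le> a")
        case True
        then have "M = 0" using uy bd by auto
        then show ?thesis using le[OF y1] nn[of "y+1"] by auto
      next
        case False
        then have yab: "a < y" "y < b" using h unfolding y_def by auto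
        have "u (y - 1) \<le> M" using le yab by auto
        then have "(1 - q) * u (y - 1) \<le> (1 - q) * M" using q by (intro mult_left_mono) auto
        then have "M \<le> q * u (y + 1) + (1 - q) * M"
          using rec[OF yab] uy by linarith
        then have "q * M \<le> q * u (y + 1)" by (simp add: algebra_simps)
        then have "M \<le> u (y + 1)" using q by simp
        then show ?thesis using le[OF y1] by auto
      qed
      moreover have "x0 + int (Suc j) = y + 1" unfolding y_def by simp
      ultimately show "u (x0 + int (Suc j)) = M" by metis
    qed
  qed
  have "u b = M" using claim[of "nat (b - x0)"] x0 by auto
  then have "M = 0" using bd by auto
  then show ?thesis using le[of x] nn[of x] True by auto
qed

lemma NE_null:
  assumes q: "0 < q" "q \<le> 1"
  shows "measure (Sp q) (NE a b x) = 0"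
proof (rule maxp[where u = "\<lambda>x. measure (Sp q) (NE a b x)" and a = a and b = b and q = q])
  fix y assume "y \<le> a \<or> b \<le> y"
  then have "NE a b y = {}" by (auto simp: NE_def) (metis F.simps(1) not_less)+
  then show "measure (Sp q) (NE a b y) = 0" by simp
next
  fix y assume "a < y" "y < b"
  then show "measure (Sp q) (NE a b y) = q * measure (Sp q) (NE a b (y + 1)) + (1 - q) * measure (Sp q) (NE a b (y - 1))"
    using q by (intro NE_rec) auto
qed (use q in auto)

lemma HLHR_one:
  assumes q: "0 < q" "q \<le> 1" and x: "a < x" "x < b"
  shows "measure (Sp q) (HL a b x) + measure (Sp q) (HR a b x) = 1"
proof -
  interpret P: prob_space "Sp q" by (rule prob_Sp)
  have "1 = measure (Sp q) (space (Sp q))" using P.prob_space by simp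
  also have "space (Sp q) = (HL a b x \<union> HR a b x) \<union> NE a b x" using exhaust[OF x] by auto
  also have "measure (Sp q) \<dots> = measure (Sp q) (HL a b x \<union> HR a b x) + measure (Sp q) (NE a b x)"
    by (rule P.finite_measure_Union) (use NE_disj in auto)
  also have "\<dots> = measure (Sp q) (HL a b x) + measure (Sp q) (HR a b x)"
    using NE_null[OF q] HL_HR_disj[of a b x] x by (simp add: P.finite_measure_Union)
  finally show ?thesis by simp
qed



lemma range_ge1: "0 \<le> x \<Longrightarrow> x \<le> int N \<Longrightarrow> 1 \<le> range_walk N x \<omega>"
proof -
  assume x: "0 \<le> x" "x \<le> int N"
  have "range (walk N x \<omega>) \<subseteq> {0..int N}" using walk_bounds[OF x] by auto
  then have "finite (range (walk N x \<omega>))" by (rule finite_subset) auto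
  moreover have "range (walk N x \<omega>) \<noteq> {}" by auto
  ultimately show ?thesis using range_walk_eq2[OF x] by (simp add: Suc_le_eq card_gt_0_iff)
qed

lemma R_sets[measurable]: "{\<omega>. range_walk N x \<omega> \<le> r} \<in> sets (Sp q)"
proof -
  have "{\<omega> \<in> space (Sp q). real (range_walk N x \<omega>) \<le> real r} \<in> sets (Sp q)" by measurable
  then show ?thesis by simp
qed

lemma P_event:
  assumes q: "0 < q" "q \<le> 1" and x: "0 < x" "x < int N" and r: "1 \<le> r" "r \<le> N"
  shows "measure (Sp q) {\<omega>. range_walk N x \<omega> \<le> r}
       = measure (Sp q) (HL 0 (int r) x) + measure (Sp q) (HR (int N - int r) (int N) x)"
proof -
  interpret P: prob_space "Sp q" by (rule prob_Sp)
  have eq: "{\<omega>. range_walk N x \<omega> \<le> r} = {\<omega>. card (range (walk N x \<omega>)) \<le> r}"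
    using range_walk_eq2[of x N] x by auto
  have null: "NE 0 (int N) x \<in> null_sets (Sp q)"
    using NE_null[OF q] by (intro null_setsI) (auto simp: P.emeasure_eq_measure)
  have "measure (Sp q) {\<omega>. range_walk N x \<omega> \<le> r} = measure (Sp q) ({\<omega>. range_walk N x \<omega> \<le> r} - NE 0 (int N) x)"
    by (rule measure_Diff_null_set[symmetric]) (use null in auto)
  also have "\<dots> = measure (Sp q) (HL 0 (int r) x \<union> HR (int N - int r) (int N) x)"
    unfolding eq using event_eq[OF x r] by simp
  also have "\<dots> = measure (Sp q) (HL 0 (int r) x) + measure (Sp q) (HR (int N - int r) (int N) x)"
  proof (rule P.finite_measure_Union)
    have s1: "HL 0 (int r) x \<subseteq> HL 0 (int N) x" by (rule HL_mono) (use r in auto)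
    have s2: "HR (int N - int r) (int N) x \<subseteq> HR 0 (int N) x" by (rule HR_mono) (use r in auto)
    have d: "HL 0 (int N) x \<inter> HR 0 (int N) x = {}" by (rule HL_HR_disj) (use x in auto)
    show "HL 0 (int r) x \<inter> HR (int N - int r) (int N) x = {}" using s1 s2 d by blast
  qed auto
  finally show ?thesis .
qed

lemma total:
  assumes q: "0 < q" "q \<le> 1" and r: "1 \<le> r" "r \<le> N"
  shows "(\<Sum>x\<in>{0..int N}. measure (Sp q) {\<omega>. range_walk N x \<omega> \<le> r}) = real r + 1"
proof -
  interpret P: prob_space "Sp q" by (rule prob_Sp)
  let ?m = "\<lambda>x. measure (Sp q) {\<omega>. range_walk N x \<omega> \<le> r}"
  let ?L = "\<lambda>x. measure (Sp q) (HL 0 (int r) x)"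
  let ?R = "\<lambda>x. measure (Sp q) (HR (int N - int r) (int N) x)"
  have bd: "?m x = 1" if "x \<in> {0, int N}" for x
  proof -
    have "range_walk N x \<omega> = 1" for \<omega>
      using range_walk_eq2[of x N \<omega>] walk_boundary[OF that] that by auto
    then have "{\<omega>. range_walk N x \<omega> \<le> r} = space (Sp q)" using r by auto
    then show ?thesis using P.prob_space by simp
  qed
  have N1: "1 \<le> N" using r by simp
  have split: "{0..int N} = insert 0 (insert (int N) {1..int N - 1})" using N1 by auto
  have "(\<Sum>x\<in>{0..int N}. ?m x) = ?m 0 + ?m (int N) + (\<Sum>x\<in>{1..int N - 1}. ?m x)"
    unfolding split using N1 by (simp add: add.assoc)
  also have "?m 0 + ?m (int N) = 2" using bd by simp
  also have "(\<Sum>x\<in>{1..int N - 1}. ?m x) = (\<Sum>x\<in>{1..int N - 1}. ?L x) + (\<Sum>x\<in>{1..int N - 1}. ?R x)"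
    by (subst sum.distrib[symmetric], rule sum.cong) (use P_event[OF q _ _ r] in auto)
  also have "(\<Sum>x\<in>{1..int N - 1}. ?L x) = (\<Sum>x\<in>{1..int r - 1}. ?L x)"
    by (rule sum.mono_neutral_right) (use r HL_empty in auto)
  also have "(\<Sum>x\<in>{1..int N - 1}. ?R x) = (\<Sum>x\<in>{1 + (int N - int r)..(int r - 1) + (int N - int r)}. ?R x)"
    by (rule sum.mono_neutral_right) (use r HR_empty in auto)
  also have "\<dots> = (\<Sum>y\<in>{1..int r - 1}. ?R (y + (int N - int r)))"
    by (subst image_add_atLeastAtMost'[symmetric], subst sum.reindex) (auto simp: inj_on_def)
  also have "\<dots> = (\<Sum>y\<in>{1..int r - 1}. measure (Sp q) (HR 0 (int r) y))"
    using HR_shift[of 0 "int N - int r" "int r"] by simp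
  also have "(\<Sum>x\<in>{1..int r - 1}. ?L x) + \<dots> = (\<Sum>y\<in>{1..int r - 1}. 1)"
    by (subst sum.distrib[symmetric], rule sum.cong) (use HLHR_one[OF q] in auto)
  also have "\<dots> = real r - 1" using r by simp
  finally show ?thesis by simp
qed

lemma g_meas:
  "(\<lambda>(x, \<omega>). real (range_walk N x \<omega>) / real N) \<in> borel_measurable (walk_space N q)"
proof -
  have "(\<lambda>(x, \<omega>). real (range_walk N x \<omega>) / real N) \<in> borel_measurable (count_space UNIV \<Otimes>\<^sub>M Sp q)"
  proof (rule measurable_pair_measure_countable1)
    fix x :: int
    have "(\<lambda>\<omega>. real (range_walk N x \<omega>) / real N) \<in> borel_measurable (Sp q)" by measurable
    then show "(\<lambda>y. (\<lambda>(x, \<omega>). real (range_walk N x \<omega>) / real N) (x, y)) \<in> borel_measurable (Sp q)" by simp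
  qed simp
  then show ?thesis
    unfolding walk_space_def Sp_def[symmetric]
    by (subst measurable_cong_sets[OF sets_pair_measure_cong[OF sets_measure_pmf_count_space refl] refl])
qed

lemma cdf_sum:
  assumes "0 < N"
  shows "measure (range_law p N) {..t}
     = (\<Sum>x\<in>{0..int N}. measure (Sp (p N)) {\<omega>. real (range_walk N x \<omega>) / real N \<le> t}) / (real N + 1)"
proof -
  let ?g = "\<lambda>(x, \<omega>). real (range_walk N x \<omega>) / real N"
  let ?S = "Sp (p N)"
  let ?W = "walk_space N (p N)"
  let ?X = "?g -` {..t} \<inter> space ?W"
  let ?m = "\<lambda>x. measure ?S {\<omega>. real (range_walk N x \<omega>) / real N \<le> t}"
  interpret S: prob_space ?S by (rule prob_Sp)
  have W: "?W = measure_pmf (pmf_of_set {0..int N}) \<Otimes>\<^sub>M ?S" by (simp add: walk_space_def Sp_def)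
  have X: "?X \<in> sets ?W" by (rule measurable_sets[OF g_meas]) simp
  have "measure (range_law p N) {..t} = measure ?W ?X"
    unfolding range_law_def by (rule measure_distr[OF g_meas]) simp
  have "emeasure ?W ?X = (\<integral>\<^sup>+x. emeasure ?S (Pair x -` ?X) \<partial>measure_pmf (pmf_of_set {0..int N}))"
    unfolding W by (rule S.emeasure_pair_measure_alt) (use X W in simp)
  also have "\<dots> = (\<integral>\<^sup>+x. ennreal (?m x) \<partial>measure_pmf (pmf_of_set {0..int N}))"
    by (rule nn_integral_cong) (simp add: W space_pair_measure vimage_def S.emeasure_eq_measure)
  also have "\<dots> = (\<Sum>x\<in>{0..int N}. ennreal (?m x)) / of_nat (card {0..int N})"
    by (rule nn_integral_pmf_of_set) auto
  also have "\<dots> = ennreal (\<Sum>x\<in>{0..int N}. ?m x) / ennreal (real (card {0..int N}))"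
    by (subst sum_ennreal) (auto simp: ennreal_of_nat_eq_real_of_nat)
  also have "real (card {0..int N}) = real N + 1" by simp
  also have "ennreal (\<Sum>x\<in>{0..int N}. ?m x) / ennreal (real N + 1) = ennreal ((\<Sum>x\<in>{0..int N}. ?m x) / (real N + 1))"
    by (rule divide_ennreal) (auto simp: sum_nonneg)
  finally have "emeasure ?W ?X = ennreal ((\<Sum>x\<in>{0..int N}. ?m x) / (real N + 1))" .
  then have "measure ?W ?X = (\<Sum>x\<in>{0..int N}. ?m x) / (real N + 1)"
    by (simp add: measure_def sum_nonneg)
  then show ?thesis using \<open>measure (range_law p N) {..t} = measure ?W ?X\<close> by simp
qed

lemma cdf_mid:
  assumes q: "0 < p N" "p N \<le> 1" and N: "0 < N" and r: "1 \<le> \<lfloor>t * real N\<rfloor>" "\<lfloor>t * real N\<rfloor> \<le> int N"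
  shows "measure (range_law p N) {..t} = (real_of_int \<lfloor>t * real N\<rfloor> + 1) / (real N + 1)"
proof -
  define k where "k = nat \<lfloor>t * real N\<rfloor>"
  have aux: "\<And>z::int. 1 \<le> z \<Longrightarrow> z \<le> int N \<Longrightarrow> 1 \<le> nat z \<and> nat z \<le> N \<and> real (nat z) = real_of_int z"
    by auto
  have k: "1 \<le> k" "k \<le> N" "real k = real_of_int \<lfloor>t * real N\<rfloor>"
    using aux[OF r] unfolding k_def by auto
  have "{\<omega>. real (range_walk N x \<omega>) / real N \<le> t} = {\<omega>. range_walk N x \<omega> \<le> k}" for x
  proof -
    have "real (range_walk N x \<omega>) / real N \<le> t \<longleftrightarrow> range_walk N x \<omega> \<le> k" for \<omega>
    proof -
      have "real (range_walk N x \<omega>) / real N \<le> t \<longleftrightarrow> real (range_walk N x \<omega>) \<le> t * real N"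
        using N by (simp add: divide_le_eq)
      also have "\<dots> \<longleftrightarrow> int (range_walk N x \<omega>) \<le> \<lfloor>t * real N\<rfloor>"
        by (simp add: le_floor_iff)
      also have "\<dots> \<longleftrightarrow> range_walk N x \<omega> \<le> k"
      proof -
        have aux2: "\<And>z::int. \<And>n::nat. 1 \<le> z \<Longrightarrow> (int n \<le> z \<longleftrightarrow> n \<le> nat z)" by auto
        show ?thesis unfolding k_def by (rule aux2[OF r(1)])
      qed
      finally show ?thesis .
    qed
    then show ?thesis by auto
  qed
  then show ?thesis using cdf_sum[OF N, of p t] total[OF q k(1,2)] k(3) by simp
qed

lemma cdf_low:
  assumes N: "0 < N" and t: "t \<le> 0"
  shows "measure (range_law p N) {..t} = 0"
proof -
  have "{\<omega>. real (range_walk N x \<omega>) / real N \<le> t} = {}" if "x \<in> {0..int N}" for x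
  proof -
    have pos: "real (range_walk N x \<omega>) / real N > 0" for \<omega>
      using range_ge1[of x N \<omega>] that N by auto
    show ?thesis
    proof (rule equals0I)
      fix \<omega> assume "\<omega> \<in> {\<omega>. real (range_walk N x \<omega>) / real N \<le> t}"
      then have "real (range_walk N x \<omega>) / real N \<le> t" by simp
      with pos[of \<omega>] t show False by linarith
    qed
  qed
  then show ?thesis using cdf_sum[OF N, of p t] by simp
qed

lemma cdf_high:
  assumes q: "0 < p N" "p N \<le> 1" and N: "0 < N" and t: "1 \<le> t"
  shows "measure (range_law p N) {..t} = 1"
proof -
  interpret P: prob_space "Sp (p N)" by (rule prob_Sp)
  have "real N + 1 = (\<Sum>x\<in>{0..int N}. measure (Sp (p N)) {\<omega>. range_walk N x \<omega> \<le> N})"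
    using total[OF q, of N N] N by simp
  also have "\<dots> \<le> (\<Sum>x\<in>{0..int N}. measure (Sp (p N)) {\<omega>. real (range_walk N x \<omega>) / real N \<le> t})"
  proof (rule sum_mono)
    fix x
    have "{\<omega>. range_walk N x \<omega> \<le> N} \<subseteq> {\<omega>. real (range_walk N x \<omega>) / real N \<le> t}"
    proof
      fix \<omega> assume "\<omega> \<in> {\<omega>. range_walk N x \<omega> \<le> N}"
      then have "real (range_walk N x \<omega>) / real N \<le> 1" using N by (simp add: divide_le_eq)
      then show "\<omega> \<in> {\<omega>. real (range_walk N x \<omega>) / real N \<le> t}" using t by simp
    qed
    moreover have "{\<omega>. real (range_walk N x \<omega>) / real N \<le> t} \<in> sets (Sp (p N))"
    proof -
      have "{\<omega> \<in> space (Sp (p N)). real (range_walk N x \<omega>) / real N \<le> t} \<in> sets (Sp (p N))" by measurable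
      then show ?thesis by simp
    qed
    ultimately show "measure (Sp (p N)) {\<omega>. range_walk N x \<omega> \<le> N} \<le> measure (Sp (p N)) {\<omega>. real (range_walk N x \<omega>) / real N \<le> t}"
      by (rule P.finite_measure_mono)
  qed
  finally have ge: "real N + 1 \<le> (\<Sum>x\<in>{0..int N}. measure (Sp (p N)) {\<omega>. real (range_walk N x \<omega>) / real N \<le> t})" .
  have le: "(\<Sum>x\<in>{0..int N}. measure (Sp (p N)) {\<omega>. real (range_walk N x \<omega>) / real N \<le> t}) \<le> (\<Sum>x\<in>{0..int N}. 1)"
    by (rule sum_mono) simp
  have "(\<Sum>x\<in>{0..int N}. (1::real)) = real N + 1" by simp
  then show ?thesis using ge le cdf_sum[OF N, of p t] by simp
qed




lemma meas_Icc: "measure lborel {l..u::real} = (if l \<le> u then u - l else 0)"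
  by (simp add: measure_def emeasure_lborel_Icc_eq)

lemma cdf_unif:
  "cdf (uniform_measure lborel {0..1::real}) t = (if t \<le> 0 then 0 else if t \<le> 1 then t else 1)"
proof -
  have e1: "emeasure lborel {0..1::real} = 1" by simp
  have "cdf (uniform_measure lborel {0..1::real}) t = measure lborel ({0..1} \<inter> {..t}) / measure lborel {0..1::real}"
    unfolding cdf_def by (rule measure_uniform_measure) (simp_all add: e1)
  also have "{0..1} \<inter> {..t} = {0..min t 1}" by auto
  finally show ?thesis by (simp add: meas_Icc)
qed

theorem proposition2p2:
  fixes p :: "nat \<Rightarrow> real"
  assumes regime:
    "(\<forall>N. p N = 1/2)
     \<or> (\<exists>c>0. \<forall>\<^sub>F N in sequentially. p N = 1/2 + c / real N)
     \<or> (\<exists>p0. 1/2 < p0 \<and> p0 \<le> 1 \<and> (\<forall>N. p N = p0))"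
  shows "weak_conv_m (range_law p) (uniform_measure lborel {0..1::real})"
proof -
  have evp: "eventually (\<lambda>N. 0 < p N \<and> p N \<le> 1) sequentially"
    using regime
  proof (elim disjE exE conjE)
    assume h: "\<forall>N. p N = 1/2"
    have "0 < p N \<and> p N \<le> 1" for N
    proof -
      have "p N = 1/2" using h by blast
      then show ?thesis by simp
    qed
    then have "\<forall>N. 0 < p N \<and> p N \<le> 1" by blast
    then show ?thesis by (rule always_eventually)
  next
    fix c :: real assume c: "c > 0" and ev: "\<forall>\<^sub>F N in sequentially. p N = 1/2 + c / real N"
    have ev2: "\<forall>\<^sub>F N in sequentially. 2 * c \<le> real N"
    proof (rule eventually_sequentiallyI[of "nat \<lceil>2 * c\<rceil>"])
      fix N assume "nat \<lceil>2 * c\<rceil> \<le> N"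
      then show "2 * c \<le> real N" by linarith
    qed
    from ev ev2 show ?thesis
    proof eventually_elim
      case (elim N)
      then have N: "real N > 0" using c by linarith
      have "c / real N \<le> 1/2" using elim N by (simp add: divide_le_eq)
      moreover have "c / real N > 0" using c N by simp
      ultimately show ?case using elim(1) by (intro conjI) linarith+
    qed
  next
    fix p0 :: real assume "1/2 < p0" "p0 \<le> 1" "\<forall>N. p N = p0"
    then show ?thesis by simp
  qed
  have evN: "eventually (\<lambda>N::nat. 2 \<le> N) sequentially"
    by (rule eventually_sequentiallyI[of 2]) simp
  show ?thesis unfolding weak_conv_m_def weak_conv_def
  proof (intro allI impI)
    fix t :: real
    show "(\<lambda>n. cdf (range_law p n) t) \<longlonglongrightarrow> cdf (uniform_measure lborel {0..1}) t"
    proof (cases "t \<le> 0")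
      case True
      have "eventually (\<lambda>N. cdf (range_law p N) t = 0) sequentially"
        using evN by eventually_elim (auto simp: cdf_def intro!: cdf_low True)
      then show ?thesis using True by (simp add: cdf_unif tendsto_eventually)
    next
      case t0: False
      show ?thesis
      proof (cases "1 \<le> t")
        case True
        have ev1: "eventually (\<lambda>N. cdf (range_law p N) t = 1) sequentially"
          using evN evp by eventually_elim (auto simp: cdf_def intro!: cdf_high True)
        have "cdf (uniform_measure lborel {0..1}) t = 1" using True by (simp add: cdf_unif)
        then show ?thesis using tendsto_eventually[OF ev1] by simp
      next
        case False
        then have t: "0 < t" "t < 1" using t0 by auto
        have ev3: "\<forall>\<^sub>F N in sequentially. 1 / t \<le> real N"
        proof (rule eventually_sequentiallyI[of "nat \<lceil>1 / t\<rceil>"])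
          fix N assume "nat \<lceil>1 / t\<rceil> \<le> N"
          then show "1 / t \<le> real N" by linarith
        qed
        let ?g = "\<lambda>N. (real_of_int \<lfloor>t * real N\<rfloor> + 1) / (real N + 1)"
        have eq: "eventually (\<lambda>N. ?g N = cdf (range_law p N) t) sequentially"
          using evN evp ev3
        proof eventually_elim
          case (elim N)
          have "1 \<le> t * real N" using elim t by (simp add: divide_le_eq mult.commute)
          then have r1: "1 \<le> \<lfloor>t * real N\<rfloor>" by simp
          have "t * real N \<le> real N" using t by (intro mult_left_le_one_le) auto
          then have r2: "\<lfloor>t * real N\<rfloor> \<le> int N" by (simp add: floor_le_iff)
          show ?case unfolding cdf_def
            by (rule cdf_mid[symmetric]) (use elim r1 r2 in auto)
        qed
        have lim1: "(\<lambda>N. t * (real N / real (Suc N))) \<longlonglongrightarrow> t"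
          using tendsto_mult[OF tendsto_const LIMSEQ_n_over_Suc_n, of t] by simp
        have lim2: "(\<lambda>N. t * (real N / real (Suc N)) + inverse (real (Suc N))) \<longlonglongrightarrow> t"
          using tendsto_add[OF lim1 LIMSEQ_inverse_real_of_nat] by simp
        have "?g \<longlonglongrightarrow> t"
        proof (rule tendsto_sandwich[OF _ _ lim1 lim2])
          show "\<forall>\<^sub>F N in sequentially. t * (real N / real (Suc N)) \<le> ?g N"
          proof (rule always_eventually, rule allI)
            fix N :: nat
            have "t * real N \<le> real_of_int \<lfloor>t * real N\<rfloor> + 1"
              using real_of_int_floor_add_one_gt[of "t * real N"] by linarith
            then show "t * (real N / real (Suc N)) \<le> ?g N"
              by (simp add: divide_right_mono add.commute)
          qed
          show "\<forall>\<^sub>F N in sequentially. ?g N \<le> t * (real N / real (Suc N)) + inverse (real (Suc N))"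
          proof (rule always_eventually, rule allI)
            fix N :: nat
            have "real_of_int \<lfloor>t * real N\<rfloor> + 1 \<le> t * real N + 1" by simp
            then have "?g N \<le> (t * real N + 1) / (real N + 1)"
              by (intro divide_right_mono) auto
            also have "\<dots> = t * (real N / real (Suc N)) + inverse (real (Suc N))"
              by (simp add: field_simps add.commute)
            finally show "?g N \<le> t * (real N / real (Suc N)) + inverse (real (Suc N))" .
          qed
        qed
        then have "(\<lambda>N. cdf (range_law p N) t) \<longlonglongrightarrow> t"
          using tendsto_cong[OF eq] by simp
        then show ?thesis using t by (simp add: cdf_unif)
      qed
    qed
  qed
qed


end
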